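(* Let $G'=(V,E')$ be the cycle graph of a cycle $C=(v_0,\ldots,v_{k-1})$ (so $V=V(C)$, $E'=\textnormal{ext}(C)$), and let $G=(V,E)$ with $E\subseteq E'$, so that $G'=G+F_G(C)$ where $F_G(C)=E'\setminus E$. Suppose $ax\ge b$ is facet-defining for $\textnormal{conv}(X(G'))$ with $a\ge 0$, and define $a'\in\mathbb{R}^{E^c}$ (where $E^c=\binom{V}{2}\setminus E$) by $a'_f=a_f$ if $f\in E^c\setminus F_G(C)$ and $a'_f=0$ otherwise. Then $$a'x\ \ge\ b\Big(\sum_{f\in F_G(C)}x_f-|F_G(C)|+1\Big)$$ is facet-defining for $\textnormal{conv}(X(G))$.
   Context: $\textnormal{ext}(C)=\{\{v_{i-1},v_i\}\}_{i=1}^{k-1}\cup\{\{v_{k-1},v_0\}\}$. For a graph $H=(V_H,E_H)$, $E^c(H)=\binom{V_H}{2}\setminus E_H$; for $x\in\{0,1\}^{E^c(H)}$, $E(x)=\{f:x_f=1\}$ and $X(H)=\{x\in\{0,1\}^{E^c(H)}:(V_H,E_H\cup E(x))\text{ is chordal}\}$; a graph is chordal if every cycle with at least four vertices has a chord. $G+F$ denotes $(V,E\cup F)$. *)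

theory Defs
  imports "HOL-Analysis.Analysis"
begin

text \<open>Edges are 2-element vertex sets. A cycle is given by a list of distinct vertices.\<close>

definition ext :: "'v list \<Rightarrow> 'v set set" where
  "ext C = {{C ! (i - 1), C ! i} | i. 1 \<le> i \<and> i < length C} \<union> {{C ! (length C - 1), C ! 0}}"

definition pairs :: "'v set \<Rightarrow> 'v set set" where
  "pairs V = {{u, w} | u w. u \<in> V \<and> w \<in> V \<and> u \<noteq> w}"

definition Ec :: "'v set \<Rightarrow> 'v set set \<Rightarrow> 'v set set" where
  "Ec V E = pairs V - E"

definition chordal :: "'v set \<Rightarrow> 'v set set \<Rightarrow> bool" where
  "chordal V E \<longleftrightarrow>
     (\<forall>ws. set ws \<subseteq> V \<and> distinct ws \<and> 4 \<le> length ws \<and> ext ws \<subseteq> E \<longrightarrow>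
        (\<exists>i j. i < length ws \<and> j < length ws \<and> i \<noteq> j \<and>
               {ws ! i, ws ! j} \<in> E \<and> {ws ! i, ws ! j} \<notin> ext ws))"

text \<open>Vectors in R^{E^c(H)} are represented as vectors in real^('v set) whose
  coordinates outside E^c(H) are zero.\<close>
definition Xset :: "'v::finite set \<Rightarrow> 'v set set \<Rightarrow> (real ^ ('v set)) set" where
  "Xset V E = {x. (\<forall>f. f \<notin> Ec V E \<longrightarrow> x $ f = 0) \<and> (\<forall>f \<in> Ec V E. x $ f \<in> {0, 1}) \<and>
                  chordal V (E \<union> {f \<in> Ec V E. x $ f = 1})}"

definition facet_defining ::
  "((real ^ 'n::finite) \<Rightarrow> real) \<Rightarrow> ((real ^ 'n) \<Rightarrow> real) \<Rightarrow> (real ^ 'n) set \<Rightarrow> bool" where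
  "facet_defining lhs rhs P \<longleftrightarrow>
     (\<forall>x \<in> P. lhs x \<ge> rhs x) \<and> {x \<in> P. lhs x = rhs x} facet_of P"

end

theory Submission
  imports Defs
begin


lemma ext_succ:
  assumes "i < length ws" "2 \<le> length ws"
  shows "{ws ! i, ws ! ((i+1) mod length ws)} \<in> ext ws"
proof (cases "i + 1 < length ws")
  case True
  then have eq: "{ws ! i, ws ! ((i+1) mod length ws)} = {ws ! ((i+1) - 1), ws ! (i+1)}" by simp
  have "{ws ! ((i+1) - 1), ws ! (i+1)} \<in> {{ws ! (l - 1), ws ! l} |l. 1 \<le> l \<and> l < length ws}"
    by (rule CollectI, rule exI[of _ "i+1"]) (use True in simp)
  then show ?thesis unfolding ext_def eq by (rule UnI1)
next
  case False
  then have "i = length ws - 1" using assms by simp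
  then have "i + 1 = length ws" using assms by simp
  then have "(i+1) mod length ws = 0" by simp
  then have eq: "{ws ! i, ws ! ((i+1) mod length ws)} = {ws ! (length ws - 1), ws ! 0}"
    using \<open>i = length ws - 1\<close> by simp
  show ?thesis unfolding ext_def eq by (rule UnI2) simp
qed

lemma ext_adj:
  assumes "distinct ws" "i < length ws" "j < length ws" "{ws ! i, ws ! j} \<in> ext ws"
  shows "(\<exists>l. 1 \<le> l \<and> l < length ws \<and> {i,j} = {l-1, l}) \<or> {i,j} = {length ws - 1, 0}"
proof -
  have ne: "0 < length ws" using assms(2) by linarith
  from assms(4) consider l where "1 \<le> l" "l < length ws" "{ws!i, ws!j} = {ws!(l-1), ws!l}"
    | "{ws!i, ws!j} = {ws!(length ws - 1), ws!0}" unfolding ext_def by blast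
  then show ?thesis
  proof cases
    case 1
    then have "{i,j} = {l-1,l}" using assms nth_eq_iff_index_eq[OF assms(1)]
      by (auto simp: doubleton_eq_iff)
    then show ?thesis using 1 by blast
  next
    case 2
    then have "{i,j} = {length ws - 1, 0}" using assms ne nth_eq_iff_index_eq[OF assms(1)]
      by (auto simp: doubleton_eq_iff)
    then show ?thesis by blast
  qed
qed

lemma chordal_complete_minus:
  "chordal V (pairs V - {c})"
  unfolding chordal_def
proof (intro allI impI)
  fix ws :: "'a list"
  assume A: "set ws \<subseteq> V \<and> distinct ws \<and> 4 \<le> length ws \<and> ext ws \<subseteq> pairs V - {c}"
  then have d: "distinct ws" and l: "4 \<le> length ws" and s: "set ws \<subseteq> V" by auto
  then have wn: "ws \<noteq> []" by auto
  have n02: "{ws!0, ws!2} \<notin> ext ws"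
  proof
    assume "{ws!0, ws!2} \<in> ext ws"
    from ext_adj[OF d _ _ this] l wn show False by (auto simp: doubleton_eq_iff)
  qed
  have n13: "{ws!1, ws!3} \<notin> ext ws"
  proof
    assume "{ws!1, ws!3} \<in> ext ws"
    from ext_adj[OF d _ _ this] l wn show False by (auto simp: doubleton_eq_iff)
  qed
  have ne: "ws!0 \<noteq> ws!2" "ws!1 \<noteq> ws!3" "ws!0 \<noteq> ws!1" "ws!0 \<noteq> ws!3"
    using nth_eq_iff_index_eq[OF d, of 0 2] nth_eq_iff_index_eq[OF d, of 1 3] nth_eq_iff_index_eq[OF d, of 0 1] nth_eq_iff_index_eq[OF d, of 0 3] l wn by simp_all
  have inV: "ws!0 \<in> V" "ws!1 \<in> V" "ws!2 \<in> V" "ws!3 \<in> V" using s l nth_mem[of _ ws] by fastforce+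
  have p: "{ws!0, ws!2} \<in> pairs V" "{ws!1, ws!3} \<in> pairs V"
    unfolding pairs_def using ne inV by blast+
  have dd: "{ws!0, ws!2} \<noteq> {ws!1, ws!3}" using ne by (auto simp: doubleton_eq_iff)
  show "\<exists>i j. i < length ws \<and> j < length ws \<and> i \<noteq> j \<and>
               {ws ! i, ws ! j} \<in> pairs V - {c} \<and> {ws ! i, ws ! j} \<notin> ext ws"
  proof (cases "{ws!0, ws!2} = c")
    case True
    have "{ws!1, ws!3} \<in> pairs V - {c}" using p(2) dd True by blast
    then have "1 < length ws \<and> 3 < length ws \<and> (1::nat) \<noteq> 3 \<and> {ws!1, ws!3} \<in> pairs V - {c} \<and> {ws!1, ws!3} \<notin> ext ws"
      using n13 l by simp
    then show ?thesis by blast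
  next
    case False
    have "{ws!0, ws!2} \<in> pairs V - {c}" using p(1) False by blast
    then have "0 < length ws \<and> 2 < length ws \<and> (0::nat) \<noteq> 2 \<and> {ws!0, ws!2} \<in> pairs V - {c} \<and> {ws!0, ws!2} \<notin> ext ws"
      using n02 l wn by simp
    then show ?thesis by blast
  qed
qed



lemma ext_succ2:
  assumes "i < length ws" "2 \<le> length ws"
  shows "{ws ! i, ws ! (if i + 1 < length ws then i + 1 else 0)} \<in> ext ws"
proof -
  have "(if i + 1 < length ws then i + 1 else 0) = (i+1) mod length ws"
  proof (cases "i + 1 < length ws")
    case False
    then have "i + 1 = length ws" using assms by simp
    then show ?thesis by simp
  qed simp
  then show ?thesis using ext_succ[OF assms] by simp
qed

lemma ext_char:
  assumes "C \<noteq> []"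
  shows "ext C = {{C ! (if i = 0 then length C - 1 else i - 1), C ! i} | i. i < length C}"
  unfolding ext_def
proof (intro equalityI subsetI)
  fix e assume "e \<in> {{C ! (i - 1), C ! i} |i. 1 \<le> i \<and> i < length C} \<union> {{C ! (length C - 1), C ! 0}}"
  then show "e \<in> {{C ! (if i = 0 then length C - 1 else i - 1), C ! i} | i. i < length C}"
  proof
    assume "e \<in> {{C ! (i - 1), C ! i} |i. 1 \<le> i \<and> i < length C}"
    then obtain i where "1 \<le> i" "i < length C" "e = {C ! (i - 1), C ! i}" by blast
    then show ?thesis by (intro CollectI exI[of _ i]) auto
  next
    assume "e \<in> {{C ! (length C - 1), C ! 0}}"
    then show ?thesis using assms by (intro CollectI exI[of _ 0]) auto
  qed
next
  fix e assume "e \<in> {{C ! (if i = 0 then length C - 1 else i - 1), C ! i} | i. i < length C}"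
  then obtain i where i: "i < length C" "e = {C ! (if i = 0 then length C - 1 else i - 1), C ! i}" by blast
  show "e \<in> {{C ! (i - 1), C ! i} |i. 1 \<le> i \<and> i < length C} \<union> {{C ! (length C - 1), C ! 0}}"
  proof (cases "i = 0")
    case True then show ?thesis using i by auto
  next
    case False then show ?thesis using i by auto
  qed
qed

lemma ext_vertex:
  assumes "e \<in> ext C" "v \<in> e" and Cne: "C \<noteq> []"
  shows "v \<in> set C"
proof -
  from assms(1) ext_char[OF Cne] obtain i where i: "i < length C"
    "e = {C ! (if i = 0 then length C - 1 else i - 1), C ! i}" by blast
  have "(if i = 0 then length C - 1 else i - 1) < length C" using i by auto
  then show ?thesis using i assms(2) by auto
qed

lemma path_consec:
  fixes C :: "'a list" and k j :: nat
  defines "k \<equiv> length C"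
  defines "r \<equiv> \<lambda>t. if j \<le> t then t - j else t + k - j"
  assumes d: "distinct C" and k3: "3 \<le> k" and j: "j < k"
    and f: "f = {C ! (if j = 0 then k - 1 else j - 1), C ! j}"
    and s: "s < k" and t: "t < k" and e: "{C ! s, C ! t} \<in> ext C - {f}"
  shows "r t = r s + 1 \<or> r s = r t + 1"
proof -
  have Cne: "C \<noteq> []" using k3 k_def by auto
  from e ext_char[OF Cne] obtain i where i: "i < k"
    "{C ! s, C ! t} = {C ! (if i = 0 then k - 1 else i - 1), C ! i}"
    and nf: "{C ! s, C ! t} \<noteq> f" unfolding k_def by blast
  have ij: "i \<noteq> j" using i nf f by auto
  define p where "p = (if i = 0 then k - 1 else i - 1)"
  have pk: "p < k" using i p_def by auto
  have eq: "{C ! s, C ! t} = {C ! p, C ! i}" using i(2) p_def by simp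
  have inj: "\<And>x y. x < k \<Longrightarrow> y < k \<Longrightarrow> C ! x = C ! y \<Longrightarrow> x = y"
    using nth_eq_iff_index_eq[OF d] k_def by blast
  have st: "(s = p \<and> t = i) \<or> (s = i \<and> t = p)"
  proof -
    from eq have "(C!s = C!p \<and> C!t = C!i) \<or> (C!s = C!i \<and> C!t = C!p)"
      by (simp add: doubleton_eq_iff)
    then show ?thesis using inj s t pk i(1) by blast
  qed
  have ri: "r i = r p + 1"
  proof (cases "i = 0")
    case True
    then have "p = k - 1" "1 \<le> j" using p_def ij by auto
    then show ?thesis unfolding r_def using True j k3 by (simp; arith)
  next
    case False
    then have pp: "p = i - 1" using p_def by simp
    show ?thesis
    proof (cases "j \<le> p")
      case True then show ?thesis unfolding r_def using pp False by (simp; arith)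
    next
      case False
      then have "i \<le> j" using pp by simp
      then have "i < j" using ij by simp
      then show ?thesis unfolding r_def using pp \<open>i \<noteq> 0\<close> False j by simp
    qed
  qed
  then show ?thesis using st by auto
qed

lemma path_acyclic:
  assumes d: "distinct C" and k3: "3 \<le> length C" and fC: "f \<in> ext C"
  shows "chordal V (ext C - {f})"
  unfolding chordal_def
proof (intro allI impI)
  fix ws :: "'a list"
  assume A: "set ws \<subseteq> V \<and> distinct ws \<and> 4 \<le> length ws \<and> ext ws \<subseteq> ext C - {f}"
  define k where "k = length C"
  define n where "n = length ws"
  have dw: "distinct ws" and n4: "4 \<le> n" and sub: "ext ws \<subseteq> ext C - {f}" using A n_def by auto
  have Cne: "C \<noteq> []" using k3 by auto
  from fC ext_char[OF Cne] obtain j where j: "j < k"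
    "f = {C ! (if j = 0 then k - 1 else j - 1), C ! j}" unfolding k_def by blast
  define r where "r = (\<lambda>t. if j \<le> t then t - j else t + k - j)"
  have rinj: "\<And>s t. s < k \<Longrightarrow> t < k \<Longrightarrow> r s = r t \<Longrightarrow> s = t"
    unfolding r_def using j by (auto split: if_splits)
  define nx where "nx = (\<lambda>i. if i + 1 < n then i + 1 else 0)"
  have edge: "\<And>i. i < n \<Longrightarrow> {ws ! i, ws ! nx i} \<in> ext C - {f}"
    using ext_succ2[of _ ws] n4 sub unfolding nx_def n_def by force
  have inC: "\<forall>i. \<exists>tt. i < n \<longrightarrow> tt < k \<and> ws ! i = C ! tt"
  proof (intro allI)
    fix i
    show "\<exists>tt. i < n \<longrightarrow> tt < k \<and> ws ! i = C ! tt"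
    proof (cases "i < n")
      case True
      have "ws ! i \<in> {ws ! i, ws ! nx i}" by simp
      then have "ws ! i \<in> set C" using edge[OF True] ext_vertex[OF _ _ Cne] by blast
      then show ?thesis by (metis in_set_conv_nth k_def)
    qed simp
  qed
  from choice[OF inC] obtain t where t0: "\<forall>i. i < n \<longrightarrow> t i < k \<and> ws ! i = C ! t i" by blast
  have t: "\<And>i. i < n \<Longrightarrow> t i < k \<and> ws ! i = C ! t i" using t0 by blast
  define R where "R = (\<lambda>i. r (t i))"
  have fin: "finite (R ` {..<n})" by simp
  have "R 0 \<in> R ` {..<n}" using n4 by simp
  then have nen: "R ` {..<n} \<noteq> {}" by blast
  obtain i0 where i0: "i0 < n" "R i0 = Min (R ` {..<n})" using Min_in[OF fin nen] by auto
  have mn: "\<And>i. i < n \<Longrightarrow> R i0 \<le> R i" using i0(2) fin by simp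
  have step: "\<And>i l. i < n \<Longrightarrow> l < n \<Longrightarrow> {ws ! i, ws ! l} \<in> ext C - {f} \<Longrightarrow> R l = R i + 1 \<or> R i = R l + 1"
  proof -
    fix i l assume il: "i < n" "l < n" "{ws ! i, ws ! l} \<in> ext C - {f}"
    then have "{C ! t i, C ! t l} \<in> ext C - {f}" using t by simp
    then show "R l = R i + 1 \<or> R i = R l + 1"
      using path_consec[of C j f "t i" "t l"] d k3 j t[OF il(1)] t[OF il(2)]
      unfolding R_def r_def k_def by simp
  qed
  define a where "a = nx i0"
  define b where "b = (if i0 = 0 then n - 1 else i0 - 1)"
  have an: "a < n" and bn: "b < n" using i0 n4 unfolding a_def b_def nx_def by auto
  have nxb: "nx b = i0" unfolding nx_def b_def using i0 n4 by auto
  have ab: "a \<noteq> b" unfolding a_def b_def nx_def using i0 n4 by auto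
  have e1: "{ws ! i0, ws ! a} \<in> ext C - {f}" using edge[OF i0(1)] a_def by simp
  have e2: "{ws ! i0, ws ! b} \<in> ext C - {f}" using edge[OF bn] nxb by (simp add: insert_commute)
  have Ra: "R a = R i0 + 1" using step[OF i0(1) an e1] mn[OF an] by auto
  have Rb: "R b = R i0 + 1" using step[OF i0(1) bn e2] mn[OF bn] by auto
  have "t a = t b" using rinj[of "t a" "t b"] t an bn Ra Rb unfolding R_def by auto
  then have "ws ! a = ws ! b" using t an bn by metis
  then have "a = b" using nth_eq_iff_index_eq[OF dw] an bn n_def by blast
  with ab have False by simp
  then show "\<exists>i j. i < length ws \<and> j < length ws \<and> i \<noteq> j \<and>
               {ws ! i, ws ! j} \<in> ext C - {f} \<and> {ws ! i, ws ! j} \<notin> ext ws"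
    by simp
qed



definition indv :: "'a set \<Rightarrow> real ^ 'a" where
  "indv S = (\<chi> f. if f \<in> S then 1 else 0)"

lemma indv_nth [simp]: "indv S $ f = (if f \<in> S then 1 else 0)"
  by (simp add: indv_def)

definition Sub :: "'a set \<Rightarrow> (real ^ 'a) set" where
  "Sub D = {x. \<forall>i. i \<notin> D \<longrightarrow> x $ i = 0}"

lemma subspace_Sub: "subspace (Sub D)"
  unfolding subspace_def Sub_def by auto

lemma aff_dim_Sub: "aff_dim (Sub (D :: 'a::finite set)) = int (card D)"
proof -
  have "vec.dim (Sub D) = card D" unfolding Sub_def by (rule dim_substandard_cart)
  then have "dim (Sub D) = card D" by (simp add: dim_vec_eq)
  then show ?thesis using aff_dim_subspace[OF subspace_Sub[of D]] by simp
qed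

lemma hull_Sub: "X \<subseteq> Sub D \<Longrightarrow> convex hull X \<subseteq> Sub D"
  by (rule hull_minimal) (auto intro: subspace_imp_convex subspace_Sub)

lemma aff_dim_hull_le: "X \<subseteq> Sub (D :: 'a::finite set) \<Longrightarrow> aff_dim (convex hull X) \<le> int (card D)"
  using aff_dim_subset[OF hull_Sub] aff_dim_Sub by metis

lemma affine_coord: "affine {x :: real ^ 'a. x $ i = c}"
  unfolding affine_def by (auto simp flip: distrib_right)

lemma insert_points:
  fixes S :: "(real ^ 'a) set" and q :: "'a \<Rightarrow> real ^ 'a"
  assumes "finite I"
    and "\<forall>s\<in>S. \<forall>i\<in>I. s $ i = 1"
    and "\<forall>i\<in>I. q i $ i = 0"
    and "\<forall>i\<in>I. \<forall>j\<in>I. j \<noteq> i \<longrightarrow> q j $ i = 1"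
  shows "aff_dim (S \<union> q ` I) = aff_dim S + int (card I)"
  using assms
proof (induction I rule: finite_induct)
  case empty
  then show ?case by simp
next
  case (insert i I)
  have IH: "aff_dim (S \<union> q ` I) = aff_dim S + int (card I)"
    using insert.IH insert.prems by blast
  have sub: "S \<union> q ` I \<subseteq> {x. x $ i = 1}"
    using insert.prems insert.hyps(2) by fastforce
  have "affine hull (S \<union> q ` I) \<subseteq> {x. x $ i = 1}"
    by (rule hull_minimal[of _ _ affine, OF sub affine_coord])
  moreover have "q i $ i = 0" using insert.prems by simp
  ultimately have nin: "q i \<notin> affine hull (S \<union> q ` I)" by force
  have eq: "S \<union> q ` insert i I = insert (q i) (S \<union> q ` I)" by auto
  show ?case unfolding eq aff_dim_insert using nin IH insert.hyps by simp
qed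

lemma sum_univ_restrict:
  fixes g :: "'a::finite \<Rightarrow> real"
  shows "(\<Sum>f\<in>UNIV. if f \<in> A then g f else 0) = sum g A"
  by (simp add: sum.If_cases)



lemma ext_sub_pairs:
  assumes d: "distinct C" and k3: "3 \<le> length C"
  shows "ext C \<subseteq> pairs (set C)"
proof
  fix e assume "e \<in> ext C"
  then consider i where "1 \<le> i" "i < length C" "e = {C ! (i - 1), C ! i}"
    | "e = {C ! (length C - 1), C ! 0}" unfolding ext_def by blast
  then show "e \<in> pairs (set C)"
  proof cases
    case 1
    have "C ! (i - 1) \<noteq> C ! i" using nth_eq_iff_index_eq[OF d, of "i - 1" i] 1 by simp
    moreover have "C ! (i - 1) \<in> set C" "C ! i \<in> set C" using 1 by simp_all
    ultimately show ?thesis unfolding pairs_def using 1 by blast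
  next
    case 2
    have Cne: "C \<noteq> []" using k3 by auto
    have "C ! (length C - 1) \<noteq> C ! 0" using nth_eq_iff_index_eq[OF d, of "length C - 1" 0] k3 Cne by simp
    moreover have "C ! (length C - 1) \<in> set C" by (rule nth_mem) (use k3 in linarith)
    moreover have "C ! 0 \<in> set C" by (rule nth_mem) (use k3 in linarith)
    ultimately show ?thesis unfolding pairs_def using 2 by blast
  qed
qed

lemma empty_notin_pairs: "{} \<notin> pairs V"
  unfolding pairs_def by blast

lemma Xset_indv:
  assumes "S \<subseteq> Ec V E" "chordal V (E \<union> S)"
  shows "indv S \<in> Xset V E"
proof -
  have "{f \<in> Ec V E. indv S $ f = 1} = S" using assms(1) by auto
  then show ?thesis unfolding Xset_def using assms by auto
qed

lemma Xset_Sub: "Xset V E \<subseteq> Sub (Ec V E)"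
  unfolding Xset_def Sub_def by auto

lemma main:
  fixes C :: "'v::finite list" and E :: "'v set set"
    and a :: "real ^ ('v set)" and b :: real
  assumes dC: "distinct C" and k3: "3 \<le> length C"
    and EC: "E \<subseteq> ext C"
    and fd: "facet_defining (\<lambda>x. \<Sum>f \<in> Ec (set C) (ext C). a $ f * x $ f) (\<lambda>x. b)
           (convex hull (Xset (set C) (ext C)))"
    and anneg: "\<forall>f \<in> Ec (set C) (ext C). a $ f \<ge> 0"
  shows "facet_defining (\<lambda>x. \<Sum>f \<in> Ec (set C) E. (\<chi> f. if f \<in> Ec (set C) E - (ext C - E) then a $ f else 0) $ f * x $ f)
              (\<lambda>x. b * ((\<Sum>f \<in> ext C - E. x $ f) - real (card (ext C - E)) + 1))
              (convex hull (Xset (set C) E))"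
proof -
  define V where "V = set C"
  define Ch where "Ch = Ec V (ext C)"
  define F where "F = ext C - E"
  define EE where "EE = Ec V E"
  define X' where "X' = Xset V (ext C)"
  define X where "X = Xset V E"
  define P' where "P' = convex hull X'"
  define P where "P = convex hull X"
  define L' where "L' = (\<lambda>x::real^('v set). \<Sum>f\<in>Ch. a$f * x$f)"
  define L where "L = (\<lambda>x::real^('v set). \<Sum>f\<in>EE. (\<chi> f. if f \<in> EE - F then a $ f else 0) $ f * x $ f)"
  define R where "R = (\<lambda>x::real^('v set). b * ((\<Sum>f\<in>F. x $ f) - real (card F) + 1))"
  define face' where "face' = {x\<in>P'. L' x = b}"
  define face where "face = {x\<in>P. L x = R x}"
  have fd': "facet_defining L' (\<lambda>x. b) P'"
    using fd unfolding L'_def P'_def X'_def Ch_def V_def .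
  have an: "\<And>f. f \<in> Ch \<Longrightarrow> a $ f \<ge> 0" using anneg unfolding Ch_def V_def by blast
  have extsub: "ext C \<subseteq> pairs V" unfolding V_def by (rule ext_sub_pairs[OF dC k3])
  have EEs: "EE = Ch \<union> F" "Ch \<inter> F = {}" "EE - F = Ch"
    unfolding EE_def Ch_def F_def Ec_def using extsub EC by auto
  have LL: "\<And>x. L x = L' x"
  proof -
    fix x :: "real^('v set)"
    have "L x = (\<Sum>f\<in>EE. (if f \<in> Ch then a $ f * x $ f else 0))"
      unfolding L_def EEs(3) by (intro sum.cong) auto
    also have "\<dots> = (\<Sum>f\<in>Ch. a $ f * x $ f)"
      using EEs(1) by (simp add: sum.If_cases Int_absorb1)
    finally show "L x = L' x" unfolding L'_def .
  qed
  have finite_all: "finite (A :: 'v set set)" for A by simp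
  have X'Sub: "X' \<subseteq> Sub Ch" unfolding X'_def Ch_def by (rule Xset_Sub)
  have XSub: "X \<subseteq> Sub EE" unfolding X_def EE_def by (rule Xset_Sub)
  have P'Sub: "P' \<subseteq> Sub Ch" unfolding P'_def by (rule hull_Sub[OF X'Sub])
  have PSub: "P \<subseteq> Sub EE" unfolding P_def by (rule hull_Sub[OF XSub])
  have P'le: "aff_dim P' \<le> int (card Ch)" unfolding P'_def by (rule aff_dim_hull_le[OF X'Sub])
  have Ple: "aff_dim P \<le> int (card Ch) + int (card F)"
  proof -
    have "card EE = card Ch + card F" using EEs(1,2) by (simp add: card_Un_disjoint)
    then show ?thesis using aff_dim_hull_le[OF XSub] unfolding P_def by simp
  qed
  have ChE: "ext C \<union> Ch = pairs V" unfolding Ch_def Ec_def using extsub by auto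
  have uX: "indv Ch \<in> X'"
  proof -
    have "ext C \<union> Ch = pairs V - {{}}" using ChE empty_notin_pairs by auto
    then show ?thesis unfolding X'_def using Xset_indv[of Ch V "ext C"] chordal_complete_minus[of V "{}"]
      unfolding Ch_def by simp
  qed
  have ucX: "indv (Ch - {c}) \<in> X'" if c: "c \<in> Ch" for c
  proof -
    have "ext C \<union> (Ch - {c}) = pairs V - {c}" using ChE c unfolding Ch_def Ec_def by auto
    then show ?thesis unfolding X'_def using Xset_indv[of "Ch - {c}" V "ext C"] chordal_complete_minus[of V c]
      unfolding Ch_def by auto
  qed
  have P'ge: "aff_dim P' \<ge> int (card Ch)"
  proof -
    have e: "aff_dim ({indv Ch} \<union> (\<lambda>c. indv (Ch - {c})) ` Ch) = aff_dim {indv Ch} + int (card Ch)"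
      by (rule insert_points) auto
    have "{indv Ch} \<union> (\<lambda>c. indv (Ch - {c})) ` Ch \<subseteq> X'" using uX ucX by blast
    also have "X' \<subseteq> P'" unfolding P'_def by (rule hull_subset)
    finally have "aff_dim ({indv Ch} \<union> (\<lambda>c. indv (Ch - {c})) ` Ch) \<le> aff_dim P'"
      by (rule aff_dim_subset)
    then show ?thesis using e by simp
  qed
  have P'eq: "aff_dim P' = int (card Ch)" using P'le P'ge by simp
  from fd' have vP': "\<And>x. x \<in> P' \<Longrightarrow> b \<le> L' x" and ff': "face' facet_of P'"
    unfolding facet_defining_def face'_def by auto
  from ff' have f'ne: "face' \<noteq> {}" and f'dim: "aff_dim face' = int (card Ch) - 1"
    unfolding facet_of_def P'eq by auto
  have f'P': "face' \<subseteq> P'" unfolding face'_def by auto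
  define c0 where "c0 = ((\<chi> f. if f \<in> Ch then a $ f else 0) :: real^('v set))"
  have L'inner: "\<And>x. L' x = c0 \<bullet> x"
    unfolding L'_def c0_def inner_vec_def
    by (simp add: if_distrib[of "\<lambda>t. t * _"] sum.If_cases cong: if_cong)
  have X'nn: "X' \<subseteq> {x. 0 \<le> c0 \<bullet> x}"
  proof
    fix x assume "x \<in> X'"
    then have "\<And>f. f \<in> Ch \<Longrightarrow> x $ f \<in> {0,1}" unfolding X'_def Xset_def Ch_def V_def by blast
    then have xnn: "\<And>f. f \<in> Ch \<Longrightarrow> 0 \<le> x $ f" by fastforce
    have "0 \<le> L' x" unfolding L'_def using an xnn by (intro sum_nonneg mult_nonneg_nonneg) auto
    then show "x \<in> {x. 0 \<le> c0 \<bullet> x}" using L'inner by simp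
  qed
  have P'nn: "P' \<subseteq> {x. 0 \<le> c0 \<bullet> x}" unfolding P'_def
    by (rule hull_minimal[of _ _ convex, OF X'nn convex_halfspace_ge])
  obtain z where z: "z \<in> face'" using f'ne by blast
  have b0: "0 \<le> b"
  proof -
    have "L' z = b" "z \<in> P'" using z unfolding face'_def by auto
    then show ?thesis using P'nn L'inner by auto
  qed
  have liftX: "indv F + x \<in> X" if x: "x \<in> X'" for x
  proof -
    have x0: "\<And>f. f \<notin> Ch \<Longrightarrow> x $ f = 0" and x01: "\<And>f. f \<in> Ch \<Longrightarrow> x $ f \<in> {0,1}"
      and xc: "chordal V (ext C \<union> {f \<in> Ch. x $ f = 1})"
      using x unfolding X'_def Xset_def Ch_def by auto
    have s: "{f \<in> EE. (indv F + x) $ f = 1} = F \<union> {f \<in> Ch. x $ f = 1}"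
      using EEs x0 by auto
    have "E \<union> (F \<union> {f \<in> Ch. x $ f = 1}) = ext C \<union> {f \<in> Ch. x $ f = 1}"
      unfolding F_def using EC by auto
    then have ch: "chordal V (E \<union> {f \<in> EE. (indv F + x) $ f = 1})" using xc s by simp
    have o: "\<forall>f. f \<notin> EE \<longrightarrow> (indv F + x) $ f = 0" using x0 EEs(1) by auto
    have i: "\<forall>f\<in>EE. (indv F + x) $ f \<in> {0, 1}" using x0 x01 EEs(1,2) by auto
    show ?thesis unfolding X_def Xset_def using ch o i unfolding EE_def by blast
  qed
  have F0: "\<And>x f. x \<in> P' \<Longrightarrow> f \<in> F \<Longrightarrow> x $ f = 0"
    using P'Sub EEs(2) unfolding Sub_def by blast
  have sumF1: "(\<Sum>f\<in>F. y $ f) = real (card F)" if "\<And>f. f \<in> F \<Longrightarrow> y $ f = 1" for y :: "real^('v set)"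
    using that by simp
  have L'lift: "L' (indv F + x) = L' x" for x
    unfolding L'_def using EEs(2) by (intro sum.cong) auto
  have liftP: "indv F + x \<in> P" if "x \<in> P'" for x
  proof -
    have "(+) (indv F) ` P' = convex hull ((+) (indv F) ` X')"
      unfolding P'_def by (rule convex_hull_translation[symmetric])
    also have "\<dots> \<subseteq> P" unfolding P_def using liftX by (intro hull_mono) auto
    finally show ?thesis using that by blast
  qed
  have Rlift: "R (indv F + x) = b" if "x \<in> P'" for x
  proof -
    have "(\<Sum>f\<in>F. (indv F + x) $ f) = real (card F)"
      by (rule sumF1) (simp add: F0[OF that])
    then show ?thesis unfolding R_def by simp
  qed
  define T where "T = (+) (indv F) ` face'"
  have Tface: "T \<subseteq> face"
  proof
    fix y assume "y \<in> T"
    then obtain x where x: "x \<in> face'" "y = indv F + x" unfolding T_def by auto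
    then have xP: "x \<in> P'" and Lx: "L' x = b" unfolding face'_def by auto
    show "y \<in> face" unfolding face_def using liftP[OF xP] Rlift[OF xP] LL L'lift Lx x(2) by simp
  qed
  have qX: "indv (F - {f}) \<in> X" if f: "f \<in> F" for f
  proof -
    have "E \<union> (F - {f}) = ext C - {f}" using f EC unfolding F_def by auto
    moreover have "chordal V (ext C - {f})" unfolding V_def
      by (rule path_acyclic[OF dC k3]) (use f F_def in blast)
    ultimately show ?thesis unfolding X_def using Xset_indv[of "F - {f}" V E] EEs(1) EE_def by auto
  qed
  have qface: "indv (F - {f}) \<in> face" if f: "f \<in> F" for f
  proof -
    have inP: "indv (F - {f}) \<in> P" unfolding P_def using qX[OF f] hull_subset[of X convex] by blast
    have "L' (indv (F - {f})) = 0" unfolding L'_def using EEs(2) by (intro sum.neutral) auto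
    moreover have "(\<Sum>g\<in>F. indv (F - {f}) $ g) = real (card F) - 1"
    proof -
      have "(\<Sum>g\<in>F. indv (F - {f}) $ g) = (\<Sum>g\<in>F. if g \<in> F - {f} then 1 else 0)" by simp
      also have "\<dots> = real (card (F - {f}))"
      proof -
        have eqs: "F \<inter> {g. g \<noteq> f} = F - {f}" by blast
        show ?thesis by (simp add: sum.If_cases eqs)
      qed
      also have "\<dots> = real (card F) - 1"
      proof -
        have "F \<noteq> {}" using f by blast
        then have "0 < card F" by (simp add: card_gt_0_iff)
        then show ?thesis using f by (simp add: card_Diff_singleton of_nat_diff)
      qed
      finally show ?thesis .
    qed
    ultimately show ?thesis unfolding face_def R_def using inP LL by simp
  qed
  have Tne: "T \<noteq> {}" unfolding T_def using f'ne by simp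
  have Tdim: "aff_dim T = int (card Ch) - 1" unfolding T_def aff_dim_translation_eq f'dim ..
  have Tone: "\<forall>s\<in>T. \<forall>i\<in>F. s $ i = 1"
    unfolding T_def using F0 f'P' by auto
  have facege: "aff_dim face \<ge> int (card Ch) - 1 + int (card F)"
  proof -
    have e: "aff_dim (T \<union> (\<lambda>f. indv (F - {f})) ` F) = aff_dim T + int (card F)"
      by (rule insert_points) (use Tone in auto)
    have "T \<union> (\<lambda>f. indv (F - {f})) ` F \<subseteq> face" using Tface qface by blast
    then have "aff_dim (T \<union> (\<lambda>f. indv (F - {f})) ` F) \<le> aff_dim face" by (rule aff_dim_subset)
    then show ?thesis using e Tdim by simp
  qed
  define cc where "cc = ((\<chi> f. (if f \<in> Ch then a $ f else 0) - (if f \<in> F then b else 0)) :: real^('v set))"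
  define d where "d = b * (1 - real (card F))"
  have LR: "L x - R x = cc \<bullet> x - d" for x
  proof -
    have "cc \<bullet> x = (\<Sum>f\<in>UNIV. (if f \<in> Ch then a $ f * x $ f else 0) - (if f \<in> F then b * x $ f else 0))"
      unfolding cc_def inner_vec_def by (intro sum.cong) (auto simp: algebra_simps)
    also have "\<dots> = L' x - b * (\<Sum>f\<in>F. x $ f)"
      unfolding L'_def by (simp add: sum_subtractf sum.If_cases sum_distrib_left)
    finally show ?thesis unfolding LL R_def d_def by (simp add: algebra_simps)
  qed
  have validX: "R x \<le> L x" if x: "x \<in> X" for x
  proof -
    have x0: "\<And>f. f \<notin> EE \<Longrightarrow> x $ f = 0" and x01: "\<And>f. f \<in> EE \<Longrightarrow> x $ f \<in> {0,1}"
      and xc: "chordal V (E \<union> {f \<in> EE. x $ f = 1})"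
      using x unfolding X_def Xset_def EE_def by auto
    have xnn: "\<And>f. f \<in> Ch \<Longrightarrow> 0 \<le> x $ f" using x01 EEs(1) by fastforce
    have L'nn: "0 \<le> L' x" unfolding L'_def using an xnn by (intro sum_nonneg mult_nonneg_nonneg) auto
    show ?thesis
    proof (cases "\<forall>f\<in>F. x $ f = 1")
      case True
      define y where "y = x - indv F"
      have y0: "\<And>f. f \<notin> Ch \<Longrightarrow> y $ f = 0" unfolding y_def using x0 True EEs(1) by auto
      have y01: "\<And>f. f \<in> Ch \<Longrightarrow> y $ f \<in> {0,1}" unfolding y_def using x01 EEs by auto
      have s: "{f \<in> EE. x $ f = 1} = F \<union> {f \<in> Ch. y $ f = 1}" unfolding y_def using True EEs by auto
      have "E \<union> (F \<union> {f \<in> Ch. y $ f = 1}) = ext C \<union> {f \<in> Ch. y $ f = 1}"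
        unfolding F_def using EC by auto
      then have yc: "chordal V (ext C \<union> {f \<in> Ch. y $ f = 1})" using xc s by simp
      have "y \<in> X'" unfolding X'_def Xset_def using y0 y01 yc unfolding Ch_def by blast
      then have "y \<in> P'" unfolding P'_def using hull_subset[of X' convex] by blast
      then have "b \<le> L' y" by (rule vP')
      moreover have "L' y = L' x" unfolding y_def L'_def using EEs(2) by (intro sum.cong) auto
      moreover have "R x = b" unfolding R_def using sumF1[of x] True by simp
      ultimately show ?thesis using LL by simp
    next
      case False
      then obtain g where g: "g \<in> F" "x $ g \<noteq> 1" by blast
      then have xg: "x $ g = 0" using x01 EEs(1) by auto
      have le1: "\<And>f. f \<in> F \<Longrightarrow> x $ f \<le> 1" using x01 EEs(1) by fastforce
      have "(\<Sum>f\<in>F. x $ f) = x $ g + (\<Sum>f\<in>F - {g}. x $ f)"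
        using g(1) by (simp add: sum.remove)
      also have "\<dots> \<le> 0 + (\<Sum>f\<in>F - {g}. 1)" using xg le1 by (intro add_mono sum_mono) auto
      also have "\<dots> = real (card F) - 1"
      proof -
        have "F \<noteq> {}" using g by blast
        then have "0 < card F" by (simp add: card_gt_0_iff)
        then show ?thesis using g by (simp add: card_Diff_singleton of_nat_diff)
      qed
      finally have "(\<Sum>f\<in>F. x $ f) - real (card F) + 1 \<le> 0" by simp
      then have "R x \<le> 0" unfolding R_def using b0 by (simp add: mult_nonneg_nonpos)
      then show ?thesis using L'nn LL by simp
    qed
  qed
  have Xhalf: "X \<subseteq> {x. d \<le> cc \<bullet> x}"
  proof
    fix x assume "x \<in> X"
    then have "R x \<le> L x" by (rule validX)
    then show "x \<in> {x. d \<le> cc \<bullet> x}" using LR[of x] by simp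
  qed
  have Phalf: "P \<subseteq> {x. d \<le> cc \<bullet> x}" unfolding P_def
    by (rule hull_minimal[of _ _ convex, OF Xhalf convex_halfspace_ge])
  have validP: "\<forall>x\<in>P. R x \<le> L x"
  proof
    fix x assume "x \<in> P"
    then have "d \<le> cc \<bullet> x" using Phalf by blast
    then show "R x \<le> L x" using LR[of x] by simp
  qed
  have face_eq: "face = P \<inter> {x. cc \<bullet> x = d}"
  proof -
    have "\<And>x. (L x = R x) = (cc \<bullet> x = d)" using LR by (metis diff_eq_diff_eq eq_iff_diff_eq_0)
    then show ?thesis unfolding face_def by auto
  qed
  have cP: "convex P" unfolding P_def by (rule convex_convex_hull)
  have faceof: "face face_of P" unfolding face_eq
    by (rule face_of_Int_supporting_hyperplane_ge[OF cP]) (use Phalf in auto)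
  have "face' \<noteq> P'" using f'dim P'eq by auto
  then obtain y where y: "y \<in> P'" "y \<notin> face'" using f'P' by blast
  then have "L' y \<noteq> b" unfolding face'_def by auto
  then have "indv F + y \<notin> face" unfolding face_def using Rlift[OF y(1)] LL L'lift by simp
  then have "face \<noteq> P" using liftP[OF y(1)] by blast
  then have "aff_dim face < aff_dim P" by (rule face_of_aff_dim_lt[OF cP faceof])
  then have dimeq: "aff_dim face = aff_dim P - 1" using Ple facege by linarith
  have fne: "face \<noteq> {}" using Tne Tface by blast
  have "facet_defining L R P"
    unfolding facet_defining_def facet_of_def using validP faceof fne dimeq
    unfolding face_def by auto
  then show ?thesis unfolding L_def R_def P_def X_def EE_def F_def V_def .
qed


theorem theorem3:
  fixes C :: "'v::finite list" and E :: "'v set set"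
    and a :: "real ^ ('v set)" and b :: real
  assumes "distinct C" and "3 \<le> length C"
    and "E \<subseteq> ext C"
    and "facet_defining (\<lambda>x. \<Sum>f \<in> Ec (set C) (ext C). a $ f * x $ f) (\<lambda>x. b)
           (convex hull (Xset (set C) (ext C)))"
    and "\<forall>f \<in> Ec (set C) (ext C). a $ f \<ge> 0"
  shows "let F = ext C - E;
             a' = (\<chi> f. if f \<in> Ec (set C) E - F then a $ f else 0)
         in facet_defining (\<lambda>x. \<Sum>f \<in> Ec (set C) E. a' $ f * x $ f)
              (\<lambda>x. b * ((\<Sum>f \<in> F. x $ f) - real (card F) + 1))
              (convex hull (Xset (set C) E))"
  unfolding Let_def using main[OF assms] .

end
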